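(* Let $((f_t),(g_t),(h_t))$ be a $W_{1,+}$-geodesic on $G$ and let $\gamma$ be an oriented path of length $n\ge0$. Then $$\partial_t C_\gamma(t)=\sum_{x_0\in\mathcal{E}(\gamma_0)}C_{x_0\cup\gamma}(t)-\sum_{x_2\in\mathcal{F}(\gamma_n)}C_{\gamma\cup x_2}(t),$$ where $x_0\cup\gamma$ is the oriented path $x_0,\gamma_0,\dots,\gamma_n$ and $\gamma\cup x_2$ is $\gamma_0,\dots,\gamma_n,x_2$.
   Context: $G$ is a connected, locally finite graph with graph distance $d$; geodesics are paths of adjacent vertices $\gamma(0),\dots,\gamma(n)$ with $n=d(\gamma(0),\gamma(n))$, $e_0(\gamma)=\gamma(0)$, $e_1(\gamma)=\gamma(n)$. For finitely supported probability distributions $f_0,f_1$: $\Pi_1(f_0,f_1)$ = couplings minimizing $\sum d(x,y)\pi(x,y)$ (minimum $W_1(f_0,f_1)$), $\mathcal{C}(f_0,f_1)=\{(x,y):\pi(x,y)>0$ for some $\pi\in\Pi_1\}$; $W_1$-orientation: adjacent $x,y$ get $x\to y$ iff some geodesic $\gamma$ with $(e_0(\gamma),e_1(\gamma))\in\mathcal{C}(f_0,f_1)$ has $\gamma(k)=x,\gamma(k+1)=y$. Oriented paths have $\gamma(i)\to\gamma(i+1)$; write $\gamma_i=\gamma(i)$. $E(G)=\{(xy):x\to y\}$, $T(G)=\{(x_0x_1x_2):x_0\to x_1\to x_2\}$, $\mathcal{F}(x)=\{y:x\to y\}$, $\mathcal{E}(x)=\{y:y\to x\}$; $\nabla g(x_1)=\sum_{x_2\in\mathcal{F}(x_1)}g(x_1x_2)-\sum_{x_0\in\mathcal{E}(x_1)}g(x_0x_1)$,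 $\nabla h(x_1x_2)=\sum_{x_3\in\mathcal{F}(x_2)}h(x_1x_2x_3)-\sum_{x_0\in\mathcal{E}(x_1)}h(x_0x_1x_2)$. A $W_1$-geodesic: $W_1(f_s,f_t)=|t-s|W_1(f_0,f_1)$. A $W_{1,+}$-geodesic: a $W_1$-geodesic $(f_t)$ from $f_0$ to $f_1$ (graph with the $W_1$-orientation w.r.t. $(f_0,f_1)$), differentiable in $t$, with $g_t:E(G)\to\mathbb{R}$, $h_t:T(G)\to\mathbb{R}$ such that $\partial_tf_t=-\nabla g_t$, $\partial_tg_t=-\nabla h_t$, $g_t>0$ on $E(G)$, $f_t(x_1)h_t(x_0x_1x_2)=g_t(x_0x_1)g_t(x_1x_2)$ on $T(G)$. For an oriented path $\gamma$ of length $n$: $C_\gamma(t)=f_t(\gamma_0)$ if $n=0$; $C_\gamma(t)=g_t(\gamma_0\gamma_1)$ if $n=1$; $C_\gamma(t)=\prod_{i=0}^{n-1}g_t(\gamma_i\gamma_{i+1})/\prod_{j=1}^{n-1}f_t(\gamma_j)$ if $n\ge2$. *)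

theory Defs
  imports Complex_Main
begin

text \<open>Graphs: vertices are the elements of type 'a, adjacency is adj.
  Walks are nonempty vertex lists; a list p of length n+1 has path length n.\<close>

definition is_walk :: "('a \<Rightarrow> 'a \<Rightarrow> bool) \<Rightarrow> 'a list \<Rightarrow> bool" where
  "is_walk adj p \<longleftrightarrow> p \<noteq> [] \<and> (\<forall>i. Suc i < length p \<longrightarrow> adj (p ! i) (p ! Suc i))"

definition gdist :: "('a \<Rightarrow> 'a \<Rightarrow> bool) \<Rightarrow> 'a \<Rightarrow> 'a \<Rightarrow> nat" where
  "gdist adj x y = (LEAST n. \<exists>p. is_walk adj p \<and> hd p = x \<and> last p = y \<and> length p = Suc n)"

definition geodesic :: "('a \<Rightarrow> 'a \<Rightarrow> bool) \<Rightarrow> 'a list \<Rightarrow> bool" where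
  "geodesic adj p \<longleftrightarrow> is_walk adj p \<and> length p - 1 = gdist adj (hd p) (last p)"

definition fs_prob_dist :: "('a \<Rightarrow> real) \<Rightarrow> bool" where
  "fs_prob_dist f \<longleftrightarrow> (\<forall>x. 0 \<le> f x) \<and> finite {x. f x \<noteq> 0} \<and> (\<Sum>x\<in>{x. f x \<noteq> 0}. f x) = 1"

definition coupling :: "('a \<Rightarrow> real) \<Rightarrow> ('a \<Rightarrow> real) \<Rightarrow> ('a \<times> 'a \<Rightarrow> real) \<Rightarrow> bool" where
  "coupling f0 f1 \<pi> \<longleftrightarrow> (\<forall>p. 0 \<le> \<pi> p) \<and> finite {p. \<pi> p \<noteq> 0}
     \<and> (\<forall>x. (\<Sum>y\<in>{y. \<pi> (x, y) \<noteq> 0}. \<pi> (x, y)) = f0 x)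
     \<and> (\<forall>y. (\<Sum>x\<in>{x. \<pi> (x, y) \<noteq> 0}. \<pi> (x, y)) = f1 y)"

definition transport_cost :: "('a \<Rightarrow> 'a \<Rightarrow> bool) \<Rightarrow> ('a \<times> 'a \<Rightarrow> real) \<Rightarrow> real" where
  "transport_cost adj \<pi> = (\<Sum>p\<in>{p. \<pi> p \<noteq> 0}. real (gdist adj (fst p) (snd p)) * \<pi> p)"

definition W1 :: "('a \<Rightarrow> 'a \<Rightarrow> bool) \<Rightarrow> ('a \<Rightarrow> real) \<Rightarrow> ('a \<Rightarrow> real) \<Rightarrow> real" where
  "W1 adj f0 f1 = Inf {transport_cost adj \<pi> | \<pi>. coupling f0 f1 \<pi>}"

definition optimal_couplings :: "('a \<Rightarrow> 'a \<Rightarrow> bool) \<Rightarrow> ('a \<Rightarrow> real) \<Rightarrow> ('a \<Rightarrow> real) \<Rightarrow> ('a \<times> 'a \<Rightarrow> real) set" where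
  "optimal_couplings adj f0 f1 = {\<pi>. coupling f0 f1 \<pi> \<and> transport_cost adj \<pi> = W1 adj f0 f1}"

definition opt_support :: "('a \<Rightarrow> 'a \<Rightarrow> bool) \<Rightarrow> ('a \<Rightarrow> real) \<Rightarrow> ('a \<Rightarrow> real) \<Rightarrow> ('a \<times> 'a) set" where
  "opt_support adj f0 f1 = {(x, y). \<exists>\<pi>\<in>optimal_couplings adj f0 f1. \<pi> (x, y) > 0}"

text \<open>The W1-orientation: w1_arrow adj f0 f1 x y means x \<rightarrow> y.\<close>

definition w1_arrow :: "('a \<Rightarrow> 'a \<Rightarrow> bool) \<Rightarrow> ('a \<Rightarrow> real) \<Rightarrow> ('a \<Rightarrow> real) \<Rightarrow> 'a \<Rightarrow> 'a \<Rightarrow> bool" where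
  "w1_arrow adj f0 f1 x y \<longleftrightarrow> adj x y \<and>
     (\<exists>p k. geodesic adj p \<and> (hd p, last p) \<in> opt_support adj f0 f1
            \<and> Suc k < length p \<and> p ! k = x \<and> p ! Suc k = y)"

definition div_edge :: "('a \<Rightarrow> 'a \<Rightarrow> bool) \<Rightarrow> ('a \<Rightarrow> 'a \<Rightarrow> real) \<Rightarrow> 'a \<Rightarrow> real" where
  "div_edge arr G x1 = (\<Sum>x2\<in>{y. arr x1 y}. G x1 x2) - (\<Sum>x0\<in>{y. arr y x1}. G x0 x1)"

definition div_tri :: "('a \<Rightarrow> 'a \<Rightarrow> bool) \<Rightarrow> ('a \<Rightarrow> 'a \<Rightarrow> 'a \<Rightarrow> real) \<Rightarrow> 'a \<Rightarrow> 'a \<Rightarrow> real" where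
  "div_tri arr H x1 x2 = (\<Sum>x3\<in>{y. arr x2 y}. H x1 x2 x3) - (\<Sum>x0\<in>{y. arr y x1}. H x0 x1 x2)"

definition W1_geodesic :: "('a \<Rightarrow> 'a \<Rightarrow> bool) \<Rightarrow> (real \<Rightarrow> 'a \<Rightarrow> real) \<Rightarrow> bool" where
  "W1_geodesic adj f \<longleftrightarrow> (\<forall>t\<in>{0..1}. fs_prob_dist (f t)) \<and>
     (\<forall>s\<in>{0..1}. \<forall>t\<in>{0..1}. W1 adj (f s) (f t) = \<bar>t - s\<bar> * W1 adj (f 0) (f 1))"

definition W1_plus_geodesic :: "('a \<Rightarrow> 'a \<Rightarrow> bool) \<Rightarrow> (real \<Rightarrow> 'a \<Rightarrow> real)
     \<Rightarrow> (real \<Rightarrow> 'a \<Rightarrow> 'a \<Rightarrow> real) \<Rightarrow> (real \<Rightarrow> 'a \<Rightarrow> 'a \<Rightarrow> 'a \<Rightarrow> real) \<Rightarrow> bool" where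
  "W1_plus_geodesic adj f g h \<longleftrightarrow> W1_geodesic adj f \<and>
     (let arr = w1_arrow adj (f 0) (f 1) in
       (\<forall>t\<in>{0..1}. \<forall>x. ((\<lambda>s. f s x) has_real_derivative (- div_edge arr (g t) x)) (at t within {0..1})) \<and>
       (\<forall>t\<in>{0..1}. \<forall>x y. arr x y \<longrightarrow>
          ((\<lambda>s. g s x y) has_real_derivative (- div_tri arr (h t) x y)) (at t within {0..1})) \<and>
       (\<forall>t\<in>{0..1}. \<forall>x y. arr x y \<longrightarrow> 0 < g t x y) \<and>
       (\<forall>t\<in>{0..1}. \<forall>x0 x1 x2. arr x0 x1 \<and> arr x1 x2 \<longrightarrow>
          f t x1 * h t x0 x1 x2 = g t x0 x1 * g t x1 x2))"

definition oriented_path :: "('a \<Rightarrow> 'a \<Rightarrow> bool) \<Rightarrow> 'a list \<Rightarrow> bool" where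
  "oriented_path arr \<gamma> \<longleftrightarrow> \<gamma> \<noteq> [] \<and> (\<forall>i. Suc i < length \<gamma> \<longrightarrow> arr (\<gamma> ! i) (\<gamma> ! Suc i))"

text \<open>C_gamma(t); the path gamma has length n = length gamma - 1.\<close>

definition Cpath :: "(real \<Rightarrow> 'a \<Rightarrow> real) \<Rightarrow> (real \<Rightarrow> 'a \<Rightarrow> 'a \<Rightarrow> real) \<Rightarrow> 'a list \<Rightarrow> real \<Rightarrow> real" where
  "Cpath f g \<gamma> t =
     (if length \<gamma> = 1 then f t (\<gamma> ! 0)
      else if length \<gamma> = 2 then g t (\<gamma> ! 0) (\<gamma> ! 1)
      else (\<Prod>i<length \<gamma> - 1. g t (\<gamma> ! i) (\<gamma> ! Suc i)) / (\<Prod>j\<in>{1..length \<gamma> - 2}. f t (\<gamma> ! j)))"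

end

theory Submission
  imports Defs
begin

lemma deriv_prod_within:
  fixes u :: "'b \<Rightarrow> real \<Rightarrow> real"
  assumes "finite A"
    and "\<And>x. x \<in> A \<Longrightarrow> (u x has_real_derivative u x z * d x) (at z within S)"
  shows "((\<lambda>s. \<Prod>x\<in>A. u x s) has_real_derivative (\<Prod>x\<in>A. u x z) * (\<Sum>x\<in>A. d x)) (at z within S)"
  using assms
proof (induction A rule: finite_induct)
  case empty
  then show ?case by simp
next
  case (insert x A)
  have 1: "(u x has_real_derivative u x z * d x) (at z within S)" using insert by auto
  have 2: "((\<lambda>s. \<Prod>x\<in>A. u x s) has_real_derivative (\<Prod>x\<in>A. u x z) * (\<Sum>x\<in>A. d x)) (at z within S)"
    using insert by auto
  have "((\<lambda>s. u x s * (\<Prod>x\<in>A. u x s)) has_real_derivative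
        u x z * d x * (\<Prod>x\<in>A. u x z) + u x z * ((\<Prod>x\<in>A. u x z) * (\<Sum>x\<in>A. d x))) (at z within S)"
    using DERIV_mult[OF 1 2] by (simp add: algebra_simps)
  moreover have "u x z * d x * (\<Prod>x\<in>A. u x z) + u x z * ((\<Prod>x\<in>A. u x z) * (\<Sum>x\<in>A. d x))
     = (\<Prod>x\<in>insert x A. u x z) * (\<Sum>x\<in>insert x A. d x)"
    using insert by (simp add: algebra_simps)
  ultimately show ?case using insert by simp
qed

theorem proposition3p2:
  fixes adj :: "'a \<Rightarrow> 'a \<Rightarrow> bool"
    and f :: "real \<Rightarrow> 'a \<Rightarrow> real"
    and g :: "real \<Rightarrow> 'a \<Rightarrow> 'a \<Rightarrow> real"
    and h :: "real \<Rightarrow> 'a \<Rightarrow> 'a \<Rightarrow> 'a \<Rightarrow> real"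
    and \<gamma> :: "'a list" and t :: real
  assumes sym: "\<forall>x y. adj x y \<longrightarrow> adj y x"
    and irrefl: "\<forall>x. \<not> adj x x"
    and connected: "\<forall>x y. \<exists>p. is_walk adj p \<and> hd p = x \<and> last p = y"
    and locfin: "\<forall>x. finite {y. adj x y}"
    and geo: "W1_plus_geodesic adj f g h"
    and path: "oriented_path (w1_arrow adj (f 0) (f 1)) \<gamma>"
    and t: "t \<in> {0..1}"
  shows "((\<lambda>s. Cpath f g \<gamma> s) has_real_derivative
           ((\<Sum>x0\<in>{x. w1_arrow adj (f 0) (f 1) x (hd \<gamma>)}. Cpath f g (x0 # \<gamma>) t)
          - (\<Sum>x2\<in>{x. w1_arrow adj (f 0) (f 1) (last \<gamma>) x}. Cpath f g (\<gamma> @ [x2]) t)))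
         (at t within {0..1})"
proof -
  define arr where "arr = w1_arrow adj (f 0) (f 1)"
  have fd: "\<And>x. ((\<lambda>s. f s x) has_real_derivative (- div_edge arr (g t) x)) (at t within {0..1})"
    using geo t unfolding W1_plus_geodesic_def Let_def arr_def by blast
  have gd: "\<And>x y. arr x y \<Longrightarrow> ((\<lambda>s. g s x y) has_real_derivative (- div_tri arr (h t) x y)) (at t within {0..1})"
    using geo t unfolding W1_plus_geodesic_def Let_def arr_def by blast
  have gpos: "\<And>x y. arr x y \<Longrightarrow> 0 < g t x y"
    using geo t unfolding W1_plus_geodesic_def Let_def arr_def by blast
  have tri: "\<And>x0 x1 x2. arr x0 x1 \<Longrightarrow> arr x1 x2 \<Longrightarrow> f t x1 * h t x0 x1 x2 = g t x0 x1 * g t x1 x2"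
    using geo t unfolding W1_plus_geodesic_def Let_def arr_def by blast
  have arr_adj: "\<And>x y. arr x y \<Longrightarrow> adj x y" unfolding arr_def w1_arrow_def by blast
  have finE: "\<And>u. finite {x. arr x u}"
  proof -
    fix u
    have "{x. arr x u} \<subseteq> {x. adj u x}" using arr_adj sym by blast
    then show "finite {x. arr x u}" using locfin finite_subset by blast
  qed
  have finF: "\<And>u. finite {x. arr u x}"
  proof -
    fix u
    have "{x. arr u x} \<subseteq> {x. adj u x}" using arr_adj by blast
    then show "finite {x. arr u x}" using locfin finite_subset by blast
  qed
  have fnz: "\<And>x u v. arr x u \<Longrightarrow> arr u v \<Longrightarrow> f t u \<noteq> 0"
  proof
    fix x u v assume a: "arr x u" "arr u v" "f t u = 0"
    have "0 < g t x u * g t u v" using gpos a by simp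
    then show False using tri[OF a(1,2)] a(3) by (metis less_irrefl mult_zero_left)
  qed
  define A where "A u = (\<Sum>x\<in>{x. arr x u}. g t x u) / f t u" for u
  define B where "B u = (\<Sum>y\<in>{y. arr u y}. g t u y) / f t u" for u
  have hE: "(\<Sum>x\<in>{x. arr x u}. h t x u v) = g t u v * A u" if "arr u v" for u v
  proof -
    have "(\<Sum>x\<in>{x. arr x u}. h t x u v) = (\<Sum>x\<in>{x. arr x u}. g t u v * g t x u / f t u)"
    proof (rule sum.cong)
      fix x assume "x \<in> {x. arr x u}"
      then have "arr x u" by simp
      then show "h t x u v = g t u v * g t x u / f t u"
        using tri[OF \<open>arr x u\<close> that] fnz[OF \<open>arr x u\<close> that]
        by (simp add: field_simps)
    qed simp
    also have "\<dots> = g t u v * A u"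
      unfolding A_def by (simp add: sum_divide_distrib[symmetric] sum_distrib_left)
    finally show ?thesis .
  qed
  have hF: "(\<Sum>y\<in>{y. arr v y}. h t u v y) = g t u v * B v" if "arr u v" for u v
  proof -
    have "(\<Sum>y\<in>{y. arr v y}. h t u v y) = (\<Sum>y\<in>{y. arr v y}. g t u v * g t v y / f t v)"
    proof (rule sum.cong)
      fix y assume "y \<in> {y. arr v y}"
      then have "arr v y" by simp
      then show "h t u v y = g t u v * g t v y / f t v"
        using tri[OF that \<open>arr v y\<close>] fnz[OF that \<open>arr v y\<close>]
        by (simp add: field_simps)
    qed simp
    also have "\<dots> = g t u v * B v"
      unfolding B_def by (simp add: sum_divide_distrib[symmetric] sum_distrib_left)
    finally show ?thesis .
  qed
  have gder: "- div_tri arr (h t) u v = g t u v * (A u - B v)" if "arr u v" for u v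
    unfolding div_tri_def using hE[OF that] hF[OF that] by (simp add: algebra_simps)
  have fder: "- div_edge arr (g t) u = f t u * (A u - B u)" if "f t u \<noteq> 0" for u
    unfolding div_edge_def A_def B_def using that by (simp add: field_simps)
  have parr: "\<And>i. Suc i < length \<gamma> \<Longrightarrow> arr (\<gamma> ! i) (\<gamma> ! Suc i)"
    using path unfolding oriented_path_def arr_def by blast
  have ne: "\<gamma> \<noteq> []" using path unfolding oriented_path_def by blast
  show ?thesis
  proof (cases "length \<gamma> = 1")
    case True
    then obtain u where u: "\<gamma> = [u]" by (cases \<gamma>) auto
    have "(\<Sum>x0\<in>{x. arr x u}. Cpath f g (x0 # \<gamma>) t) = (\<Sum>x0\<in>{x. arr x u}. g t x0 u)"
      unfolding u Cpath_def by simp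
    moreover have "(\<Sum>x2\<in>{x. arr u x}. Cpath f g (\<gamma> @ [x2]) t) = (\<Sum>x2\<in>{x. arr u x}. g t u x2)"
      unfolding u Cpath_def by simp
    moreover have "(\<lambda>s. Cpath f g \<gamma> s) = (\<lambda>s. f s u)" unfolding u Cpath_def by simp
    ultimately show ?thesis using fd[of u] unfolding u arr_def[symmetric] div_edge_def by simp
  next
    case False
    then obtain m where m: "length \<gamma> = Suc (Suc m)" using ne
      by (cases \<gamma>; cases "tl \<gamma>") auto
    define Pf where "Pf s = (\<Prod>i<Suc m. g s (\<gamma> ! i) (\<gamma> ! Suc i))" for s
    define Qf where "Qf s = (\<Prod>j\<in>{1..m}. f s (\<gamma> ! j))" for s
    have Ceq: "Cpath f g \<gamma> s = Pf s / Qf s" for s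
    proof (cases "m = 0")
      case True
      then show ?thesis unfolding Cpath_def Pf_def Qf_def using m by simp
    next
      case False
      then show ?thesis unfolding Cpath_def Pf_def Qf_def using m by simp
    qed
    have intnz: "f t (\<gamma> ! j) \<noteq> 0" if jm: "j \<in> {1..m}" for j
    proof -
      obtain k where k: "j = Suc k" using jm by (cases j) auto
      have "arr (\<gamma> ! k) (\<gamma> ! j)" using parr[of k] k m jm by auto
      moreover have "arr (\<gamma> ! j) (\<gamma> ! Suc j)" using parr[of j] m jm by auto
      ultimately show ?thesis using fnz by blast
    qed
    have Pder: "(Pf has_real_derivative Pf t * (\<Sum>i<Suc m. A (\<gamma> ! i) - B (\<gamma> ! Suc i))) (at t within {0..1})"
      unfolding Pf_def
    proof (rule deriv_prod_within)
      fix i assume "i \<in> {..<Suc m}"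
      then have a: "arr (\<gamma> ! i) (\<gamma> ! Suc i)" using parr m by auto
      show "((\<lambda>s. g s (\<gamma> ! i) (\<gamma> ! Suc i)) has_real_derivative
          g t (\<gamma> ! i) (\<gamma> ! Suc i) * (A (\<gamma> ! i) - B (\<gamma> ! Suc i))) (at t within {0..1})"
        using gd[OF a] gder[OF a] by simp
    qed simp
    have Qder: "(Qf has_real_derivative Qf t * (\<Sum>j\<in>{1..m}. A (\<gamma> ! j) - B (\<gamma> ! j))) (at t within {0..1})"
      unfolding Qf_def
    proof (rule deriv_prod_within)
      fix j assume "j \<in> {1..m}"
      then show "((\<lambda>s. f s (\<gamma> ! j)) has_real_derivative
          f t (\<gamma> ! j) * (A (\<gamma> ! j) - B (\<gamma> ! j))) (at t within {0..1})"
        using fd[of "\<gamma> ! j"] fder[OF intnz] by simp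
    qed simp
    have Qnz: "Qf t \<noteq> 0" unfolding Qf_def using intnz by (simp add: prod_zero_iff)
    have D: "((\<lambda>s. Pf s / Qf s) has_real_derivative
        (Pf t * (\<Sum>i<Suc m. A (\<gamma> ! i) - B (\<gamma> ! Suc i)) * Qf t
          - Pf t * (Qf t * (\<Sum>j\<in>{1..m}. A (\<gamma> ! j) - B (\<gamma> ! j)))) / (Qf t * Qf t)) (at t within {0..1})"
      by (rule DERIV_divide[OF Pder Qder Qnz])
    have tele: "(\<Sum>i<Suc m. A (\<gamma> ! i) - B (\<gamma> ! Suc i)) - (\<Sum>j\<in>{1..m}. A (\<gamma> ! j) - B (\<gamma> ! j))
        = A (\<gamma> ! 0) - B (\<gamma> ! Suc m)"
    proof -
      have a1: "(\<Sum>i<Suc m. A (\<gamma> ! i)) = A (\<gamma> ! 0) + (\<Sum>i<m. A (\<gamma> ! Suc i))"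
        by (rule sum.lessThan_Suc_shift)
      have a2: "(\<Sum>j\<in>{1..m}. A (\<gamma> ! j)) = (\<Sum>i<m. A (\<gamma> ! Suc i))"
        using sum.atLeast1_atMost_eq[of "\<lambda>j. A (\<gamma> ! j)" m] by simp
      have b1: "(\<Sum>i<Suc m. B (\<gamma> ! Suc i)) = (\<Sum>i<m. B (\<gamma> ! Suc i)) + B (\<gamma> ! Suc m)"
        by simp
      have b2: "(\<Sum>j\<in>{1..m}. B (\<gamma> ! j)) = (\<Sum>i<m. B (\<gamma> ! Suc i))"
        using sum.atLeast1_atMost_eq[of "\<lambda>j. B (\<gamma> ! j)" m] by simp
      show ?thesis unfolding sum_subtractf a1 a2 b1 b2 by simp
    qed
    have hd: "hd \<gamma> = \<gamma> ! 0" using ne by (simp add: hd_conv_nth)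
    have lst: "last \<gamma> = \<gamma> ! Suc m" using ne m by (simp add: last_conv_nth)
    have C1: "Cpath f g (x0 # \<gamma>) t = g t x0 (\<gamma> ! 0) * Pf t / (f t (\<gamma> ! 0) * Qf t)" for x0
    proof -
      have "(\<Prod>j\<in>{1..Suc m}. f t ((x0 # \<gamma>) ! j)) = f t (\<gamma> ! 0) * Qf t"
      proof -
        have "(\<Prod>j\<in>{1..Suc m}. f t ((x0 # \<gamma>) ! j)) = (\<Prod>i<Suc m. f t (\<gamma> ! i))"
          using prod.atLeast1_atMost_eq[of "\<lambda>j. f t ((x0 # \<gamma>) ! j)" "Suc m"] by simp
        also have "\<dots> = f t (\<gamma> ! 0) * (\<Prod>i<m. f t (\<gamma> ! Suc i))"
          by (rule prod.lessThan_Suc_shift)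
        also have "(\<Prod>i<m. f t (\<gamma> ! Suc i)) = Qf t"
          unfolding Qf_def using prod.atLeast1_atMost_eq[of "\<lambda>j. f t (\<gamma> ! j)" m] by simp
        finally show ?thesis .
      qed
      moreover have "(\<Prod>i<Suc (Suc m). g t ((x0 # \<gamma>) ! i) ((x0 # \<gamma>) ! Suc i)) = g t x0 (\<gamma> ! 0) * Pf t"
        unfolding Pf_def by (rule trans[OF prod.lessThan_Suc_shift]) simp
      ultimately show ?thesis unfolding Cpath_def using m by simp
    qed
    have C2: "Cpath f g (\<gamma> @ [x2]) t = Pf t * g t (\<gamma> ! Suc m) x2 / (Qf t * f t (\<gamma> ! Suc m))" for x2
    proof -
      have "(\<Prod>i<Suc (Suc m). g t ((\<gamma> @ [x2]) ! i) ((\<gamma> @ [x2]) ! Suc i)) = Pf t * g t (\<gamma> ! Suc m) x2"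
        unfolding Pf_def using m by (simp add: nth_append)
      moreover have "(\<Prod>j\<in>{1..Suc m}. f t ((\<gamma> @ [x2]) ! j)) = Qf t * f t (\<gamma> ! Suc m)"
        unfolding Qf_def using m by (auto simp: nth_append intro!: prod.cong)
      ultimately show ?thesis unfolding Cpath_def using m by simp
    qed
    have S1: "(\<Sum>x0\<in>{x. arr x (hd \<gamma>)}. Cpath f g (x0 # \<gamma>) t) = Pf t / Qf t * A (\<gamma> ! 0)"
      unfolding C1 hd A_def
      by (simp add: divide_inverse mult_ac sum_distrib_left)
    have S2: "(\<Sum>x2\<in>{x. arr (last \<gamma>) x}. Cpath f g (\<gamma> @ [x2]) t) = Pf t / Qf t * B (\<gamma> ! Suc m)"
      unfolding C2 lst B_def
      by (simp add: divide_inverse mult_ac sum_distrib_left)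
    have "(Pf t * (\<Sum>i<Suc m. A (\<gamma> ! i) - B (\<gamma> ! Suc i)) * Qf t
          - Pf t * (Qf t * (\<Sum>j\<in>{1..m}. A (\<gamma> ! j) - B (\<gamma> ! j)))) / (Qf t * Qf t)
        = Pf t / Qf t * ((\<Sum>i<Suc m. A (\<gamma> ! i) - B (\<gamma> ! Suc i)) - (\<Sum>j\<in>{1..m}. A (\<gamma> ! j) - B (\<gamma> ! j)))"
      using Qnz by (simp add: field_simps)
    also have "\<dots> = Pf t / Qf t * A (\<gamma> ! 0) - Pf t / Qf t * B (\<gamma> ! Suc m)"
      unfolding tele by (simp add: algebra_simps)
    finally have E: "(Pf t * (\<Sum>i<Suc m. A (\<gamma> ! i) - B (\<gamma> ! Suc i)) * Qf t
          - Pf t * (Qf t * (\<Sum>j\<in>{1..m}. A (\<gamma> ! j) - B (\<gamma> ! j)))) / (Qf t * Qf t)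
        = (\<Sum>x0\<in>{x. arr x (hd \<gamma>)}. Cpath f g (x0 # \<gamma>) t)
          - (\<Sum>x2\<in>{x. arr (last \<gamma>) x}. Cpath f g (\<gamma> @ [x2]) t)"
      using S1 S2 by simp
    have "(\<lambda>s. Cpath f g \<gamma> s) = (\<lambda>s. Pf s / Qf s)" using Ceq by auto
    then show ?thesis using D unfolding E arr_def by simp
  qed
qed

end
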